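(* Let $1\le p_1\le\cdots\le p_d\le n$ be integers and let $G_0=G_0(p_1,\ldots,p_d)$ be the $d$-uniform $d$-partite hypergraph with vertex classes $V_1,\ldots,V_d$, each identified with $[n]$, in which a $d$-tuple $(x_1,\ldots,x_d)\in[n]^d$ is a non-edge if and only if $x_{(i)}\ge p_i$ for every $1\le i\le d$. Then $W_n(p_1,\ldots,p_d)\ge \|G_0\|$, where $\|G_0\|$ is the number of edges of $G_0$; i.e., every weakly $K^d_{p_1,\ldots,p_d}$-saturated $d$-uniform $d$-partite hypergraph with $n$ vertices in each class has at least $\|G_0\|$ edges.
   Context: A $d$-uniform $d$-partite hypergraph has vertex classes $V_1,\ldots,V_d$ and edges that contain exactly one vertex from each class; only such $d$-sets are considered as possible edges. A copy of $K^d_{p_1,\ldots,p_d}$ in $H$ is a permutation $\pi:[d]\to[d]$ together with sets $S_i\subseteq V_i$, $|S_i|=p_{\pi(i)}$, such that all $d$-sets with one vertex from each $S_i$ are edges. $H$ is weakly $K^d_{p_1,\ldots,p_d}$-saturated if its non-edges can be added one at a time in some order so that each added edge creates a new copy of $K^d_{p_1,\ldots,p_d}$ containing that edge. $W_n(p_1,\ldots,p_d)$ is the minimum number of edges in a weakly $K^d_{p_1,\ldots,p_d}$-saturated such hypergraph with $n$ vertices in each class. For $x\in[n]^d$, $x_{(i)}$ is the $i$-th smallest entry of $x$ sorted with repetitions. *)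

theory Defs
  imports "HOL-Combinatorics.Permutations"
begin

text \<open>Vertex classes V_1..V_d are indexed 0..d-1 and each is identified with {1..n}.
  A possible edge (a d-tuple with one vertex per class) is a list of length d with
  entries in {1..n}. A d-uniform d-partite hypergraph is a set of such tuples.\<close>

definition tuples :: "nat \<Rightarrow> nat \<Rightarrow> nat list set" where
  "tuples n d = {x. length x = d \<and> set x \<subseteq> {1..n}}"

definition copy_containing :: "nat \<Rightarrow> nat list \<Rightarrow> nat list set \<Rightarrow> nat list \<Rightarrow> bool" where
  "copy_containing n p E e \<longleftrightarrow>
     (\<exists>\<pi> S. \<pi> permutes {..<length p} \<and>
        (\<forall>i<length p. S i \<subseteq> {1..n} \<and> card (S i) = p ! (\<pi> i)) \<and>
        (\<forall>x. length x = length p \<and> (\<forall>i<length p. x ! i \<in> S i) \<longrightarrow> x \<in> E) \<and>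
        (\<forall>i<length p. e ! i \<in> S i))"

text \<open>Weak saturation: the non-edges can be listed (each exactly once) so that adding them
  one at a time, each added edge lies in a copy of K^d_p in the current hypergraph
  (such a copy is necessarily new, since it contains the new edge).\<close>
definition weakly_sat :: "nat \<Rightarrow> nat list \<Rightarrow> nat list set \<Rightarrow> bool" where
  "weakly_sat n p H \<longleftrightarrow> H \<subseteq> tuples n (length p) \<and>
     (\<exists>es. distinct es \<and> set es = tuples n (length p) - H \<and>
        (\<forall>k<length es. copy_containing n p (H \<union> set (take (Suc k) es)) (es ! k)))"

definition W :: "nat \<Rightarrow> nat list \<Rightarrow> nat" where
  "W n p = Inf {card H | H. weakly_sat n p H}"

definition G0 :: "nat \<Rightarrow> nat list \<Rightarrow> nat list set" where
  "G0 n p = {x \<in> tuples n (length p). \<not> (\<forall>i<length p. sort x ! i \<ge> p ! i)}"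

end

theory Submission
  imports Defs "HOL-Computational_Algebra.Polynomial"
begin


lemma lin_solve:
  fixes L :: "'b \<Rightarrow> 'a \<Rightarrow> real"
  assumes "finite B"
  shows "finite A \<Longrightarrow> card B < card A \<Longrightarrow> \<exists>g. (\<forall>a. a \<notin> A \<longrightarrow> g a = 0) \<and> (\<exists>a\<in>A. g a \<noteq> 0)
          \<and> (\<forall>b\<in>B. (\<Sum>a\<in>A. L b a * g a) = 0)"
  using assms
proof (induction B arbitrary: A L rule: finite_induct)
  case empty
  then obtain a0 where "a0 \<in> A" by fastforce
  then show ?case by (intro exI[of _ "\<lambda>a. if a = a0 then 1 else 0"]) auto
next
  case (insert b0 B)
  show ?case
  proof (cases "\<forall>a\<in>A. L b0 a = 0")
    case True
    from insert have "card B < card A" by simp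
    from insert.IH[OF insert.prems(1) this] obtain g where g:
      "(\<forall>a. a \<notin> A \<longrightarrow> g a = 0)" "(\<exists>a\<in>A. g a \<noteq> 0)" "(\<forall>b\<in>B. (\<Sum>a\<in>A. L b a * g a) = 0)"
      by blast
    show ?thesis using g True by (intro exI[of _ g]) auto
  next
    case False
    then obtain a0 where a0: "a0 \<in> A" "L b0 a0 \<noteq> 0" by blast
    define A' where "A' = A - {a0}"
    define L' where "L' = (\<lambda>b a. L b a - L b a0 * L b0 a / L b0 a0)"
    have fA': "finite A'" using insert.prems A'_def by auto
    have cA': "card B < card A'" using insert a0 A'_def by (simp add: card_Diff_singleton)
    from insert.IH[OF fA' cA', of L'] obtain g where g:
      "(\<forall>a. a \<notin> A' \<longrightarrow> g a = 0)" "(\<exists>a\<in>A'. g a \<noteq> 0)" "(\<forall>b\<in>B. (\<Sum>a\<in>A'. L' b a * g a) = 0)"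
      by blast
    define g' where "g' = g(a0 := - (\<Sum>a\<in>A'. L b0 a * g a) / L b0 a0)"
    have split: "(\<Sum>a\<in>A. L b a * g' a) = L b a0 * g' a0 + (\<Sum>a\<in>A'. L b a * g a)" for b
    proof -
      have "(\<Sum>a\<in>A. L b a * g' a) = L b a0 * g' a0 + (\<Sum>a\<in>A'. L b a * g' a)"
        using a0 insert.prems(1) A'_def by (simp add: sum.remove)
      moreover have "(\<Sum>a\<in>A'. L b a * g' a) = (\<Sum>a\<in>A'. L b a * g a)"
        by (rule sum.cong) (auto simp: g'_def A'_def)
      ultimately show ?thesis by simp
    qed
    have e0: "(\<Sum>a\<in>A. L b0 a * g' a) = 0"
      unfolding split using a0 by (simp add: g'_def)
    have eB: "(\<Sum>a\<in>A. L b a * g' a) = 0" if "b \<in> B" for b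
    proof -
      have "(\<Sum>a\<in>A'. L' b a * g a) = (\<Sum>a\<in>A'. L b a * g a) - L b a0 / L b0 a0 * (\<Sum>a\<in>A'. L b0 a * g a)"
        unfolding L'_def by (simp add: sum_subtractf sum_distrib_left algebra_simps)
      then have "(\<Sum>a\<in>A'. L b a * g a) = L b a0 / L b0 a0 * (\<Sum>a\<in>A'. L b0 a * g a)"
        using g(3) that by simp
      then show ?thesis unfolding split using a0 by (simp add: g'_def)
    qed
    show ?thesis
    proof (intro exI[of _ g'] conjI)
      show "\<forall>a. a \<notin> A \<longrightarrow> g' a = 0" using g(1) a0 by (auto simp: g'_def A'_def)
      show "\<exists>a\<in>A. g' a \<noteq> 0" using g(2) by (auto simp: g'_def A'_def)
      show "\<forall>b\<in>insert b0 B. (\<Sum>a\<in>A. L b a * g' a) = 0" using e0 eB by auto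
    qed
  qed
qed



lemma univ:
  fixes S :: "nat set"
  assumes fin: "finite S" and t0: "t0 \<in> S"
  shows "\<exists>c. c t0 \<noteq> 0 \<and> (\<forall>f::real poly. degree f + 2 \<le> card S \<longrightarrow> (\<Sum>t\<in>S. c t * poly f (real t)) = 0)"
proof -
  define c where "c t = 1 / (\<Prod>s\<in>S-{t}. real t - real s)" for t
  define Lt where "Lt t = (\<Prod>s\<in>S-{t}. [:- real s, 1:])" for t
  define m where "m = card S"
  have prodnz: "(\<Prod>s\<in>S-{t}. real t - real s) \<noteq> 0" for t
    using fin by (auto simp: prod_zero_iff)
  have "c t0 \<noteq> 0" using prodnz by (simp add: c_def)
  moreover have "(\<Sum>t\<in>S. c t * poly f (real t)) = 0" if df: "degree f + 2 \<le> m" for f :: "real poly"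
  proof -
    have m1: "card (S - {t}) = m - 1" if "t \<in> S" for t using that fin by (simp add: m_def)
    have degLt: "degree (Lt t) = m - 1" if "t \<in> S" for t
      unfolding Lt_def using m1[OF that] by (subst degree_prod_eq_sum_degree) auto
    have lcLt: "coeff (Lt t) (m - 1) = 1" if "t \<in> S" for t
    proof -
      have "coeff (Lt t) (m - 1) = lead_coeff (Lt t)" using degLt[OF that] by simp
      also have "\<dots> = 1" unfolding Lt_def lead_coeff_prod by simp
      finally show ?thesis .
    qed
    have polyLt: "poly (Lt t) (real u) = (if u = t then 1 / c t else 0)" if "u \<in> S" "t \<in> S" for t u
    proof (cases "u = t")
      case True then show ?thesis using prodnz by (simp add: Lt_def c_def poly_prod)
    next
      case False
      then have "u \<in> S - {t}" using that by auto
      then show ?thesis using False fin by (simp add: Lt_def poly_prod prod_zero_iff)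
    qed
    define L where "L = (\<Sum>t\<in>S. smult (c t * poly f (real t)) (Lt t))"
    have polyL: "poly L (real u) = poly f (real u)" if "u \<in> S" for u
    proof -
      have "poly L (real u) = (\<Sum>t\<in>S. c t * poly f (real t) * poly (Lt t) (real u))"
        by (simp add: L_def poly_sum)
      also have "\<dots> = (\<Sum>t\<in>S. if t = u then poly f (real u) else 0)"
        by (rule sum.cong) (use that prodnz in \<open>auto simp: polyLt c_def\<close>)
      also have "\<dots> = poly f (real u)" using that fin by simp
      finally show ?thesis .
    qed
    have degL: "degree L \<le> m - 1"
      unfolding L_def using fin
      by (intro degree_sum_le) (auto intro: order.trans[OF degree_smult_le] simp: degLt)
    have "f = L"
    proof (rule ccontr)
      assume ne: "f \<noteq> L"
      then have D: "f - L \<noteq> 0" by simp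
      have "real ` S \<subseteq> {x. poly (f - L) x = 0}" using polyL by auto
      then have "card (real ` S) \<le> card {x. poly (f - L) x = 0}"
        using poly_roots_finite[OF D] by (intro card_mono) auto
      also have "\<dots> \<le> degree (f - L)" by (rule card_poly_roots_bound[OF D])
      also have "\<dots> \<le> m - 1" using degL df
        by (intro degree_diff_le) auto
      finally have "card (real ` S) \<le> m - 1" .
      moreover have "card (real ` S) = m" unfolding m_def by (simp add: card_image)
      ultimately show False using df by linarith
    qed
    have "coeff f (m - 1) = 0" using df by (intro coeff_eq_0) linarith
    moreover have "coeff L (m - 1) = (\<Sum>t\<in>S. c t * poly f (real t))"
      unfolding L_def coeff_sum using lcLt by (intro sum.cong) auto
    ultimately show ?thesis using \<open>f = L\<close> by simp
  qed
  ultimately show ?thesis unfolding m_def by blast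
qed



definition box :: "nat \<Rightarrow> (nat \<Rightarrow> nat set) \<Rightarrow> nat list set" where
  "box d S = {x. length x = d \<and> (\<forall>i<d. x!i \<in> S i)}"

lemma box_Suc: "box (Suc d) S = (\<lambda>(t,y). t#y) ` (S 0 \<times> box d (\<lambda>i. S (Suc i)))"
proof (intro set_eqI iffI)
  fix x assume "x \<in> box (Suc d) S"
  then obtain t y where x: "x = t # y" "length y = d" by (auto simp: box_def length_Suc_conv)
  with \<open>x \<in> box (Suc d) S\<close> have "t \<in> S 0" "y \<in> box d (\<lambda>i. S (Suc i))"
    by (auto simp: box_def)
  then show "x \<in> (\<lambda>(t,y). t#y) ` (S 0 \<times> box d (\<lambda>i. S (Suc i)))" using x by auto
next
  fix x assume "x \<in> (\<lambda>(t,y). t#y) ` (S 0 \<times> box d (\<lambda>i. S (Suc i)))"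
  then show "x \<in> box (Suc d) S" by (auto simp: box_def less_Suc_eq_0_disj)
qed

lemma box_sum:
  fixes f :: "nat \<Rightarrow> nat \<Rightarrow> real"
  shows "(\<forall>i<d. finite (S i)) \<Longrightarrow> finite (box d S) \<and>
     (\<Sum>x\<in>box d S. \<Prod>i<d. f i (x!i)) = (\<Prod>i<d. \<Sum>t\<in>S i. f i t)"
proof (induction d arbitrary: S f)
  case 0
  have "box 0 S = {[]}" by (auto simp: box_def)
  then show ?case by simp
next
  case (Suc d)
  define S' where "S' = (\<lambda>i. S (Suc i))"
  have IH: "finite (box d S') \<and> (\<Sum>x\<in>box d S'. \<Prod>i<d. f (Suc i) (x!i)) = (\<Prod>i<d. \<Sum>t\<in>S' i. f (Suc i) t)"
    using Suc.IH[of S' "\<lambda>i. f (Suc i)"] Suc.prems by (auto simp: S'_def)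
  have inj: "inj_on (\<lambda>(t,y). t#y) (S 0 \<times> box d S')" by (auto simp: inj_on_def)
  have f0: "finite (S 0)" using Suc.prems by auto
  have fb: "finite (box (Suc d) S)" unfolding box_Suc S'_def[symmetric] using IH f0 by auto
  have "(\<Sum>x\<in>box (Suc d) S. \<Prod>i<Suc d. f i (x!i))
      = (\<Sum>(t,y)\<in>S 0 \<times> box d S'. \<Prod>i<Suc d. f i ((t#y)!i))"
    unfolding box_Suc S'_def[symmetric] by (subst sum.reindex[OF inj]) (simp add: case_prod_beta)
  also have "\<dots> = (\<Sum>(t,y)\<in>S 0 \<times> box d S'. f 0 t * (\<Prod>i<d. f (Suc i) (y!i)))"
    by (intro sum.cong refl) (simp add: case_prod_beta prod.lessThan_Suc_shift del: prod.lessThan_Suc)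
  also have "\<dots> = (\<Sum>t\<in>S 0. f 0 t * (\<Sum>y\<in>box d S'. \<Prod>i<d. f (Suc i) (y!i)))"
    by (simp add: sum.cartesian_product[symmetric] sum_distrib_left)
  also have "\<dots> = (\<Prod>i<Suc d. \<Sum>t\<in>S i. f i t)"
    using IH by (simp add: prod.lessThan_Suc_shift S'_def sum_distrib_right del: prod.lessThan_Suc)
  finally show ?case using fb by blast
qed

lemma sorted_ge:
  fixes a p :: "nat list"
  assumes la: "length a = d" and lp: "length p = d" and sp: "sorted p"
    and pi: "\<pi> permutes {..<d}" and ge: "\<forall>i<d. p!(\<pi> i) \<le> a!i" and k: "k < d"
  shows "p!k \<le> sort a ! k"
proof (rule ccontr)
  assume "\<not> p!k \<le> sort a ! k"
  then have lt: "sort a ! k < p!k" by simp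
  define v where "v = p!k"
  define I where "I = {i. i < d \<and> k \<le> \<pi> i}"
  have bij: "bij_betw \<pi> I {k..<d}"
  proof -
    have inj: "inj_on \<pi> I" using permutes_inj[OF pi] by (auto intro: inj_on_subset)
    have "\<pi> ` I = {k..<d}"
    proof
      show "\<pi> ` I \<subseteq> {k..<d}" proof
        fix j assume "j \<in> \<pi> ` I"
        then obtain i where "i \<in> I" "j = \<pi> i" by auto
        then show "j \<in> {k..<d}" using permutes_in_image[OF pi, of i] by (auto simp: I_def)
      qed
      show "{k..<d} \<subseteq> \<pi> ` I"
      proof
        fix j assume j: "j \<in> {k..<d}"
        have "inv \<pi> j < d" using j permutes_in_image[OF permutes_inv[OF pi]] by auto
        moreover have "\<pi> (inv \<pi> j) = j" using permutes_inverses(1)[OF pi] by simp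
        ultimately show "j \<in> \<pi> ` I" using j unfolding I_def by (metis (mono_tags, lifting) atLeastLessThan_iff imageI mem_Collect_eq)
      qed
    qed
    then show ?thesis using inj by (simp add: bij_betw_def)
  qed
  have cI: "card I = d - k" using bij_betw_same_card[OF bij] by simp
  have "I \<subseteq> {i. i < length a \<and> v \<le> a!i}"
  proof
    fix i assume "i \<in> I"
    then have "i < d" "k \<le> \<pi> i" by (auto simp: I_def)
    moreover have "\<pi> i < d" using \<open>i < d\<close> permutes_in_image[OF pi, of i] by simp
    ultimately have "p!k \<le> p!(\<pi> i)" using sp lp by (simp add: sorted_nth_mono)
    then show "i \<in> {i. i < length a \<and> v \<le> a!i}" using ge \<open>i < d\<close> la by (auto simp: v_def)
  qed
  then have "d - k \<le> length (filter (\<lambda>x. v \<le> x) a)"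
    unfolding length_filter_conv_card cI[symmetric] by (intro card_mono) auto
  also have "length (filter (\<lambda>x. v \<le> x) a) = length (filter (\<lambda>x. v \<le> x) (sort a))"
    by (metis mset_filter mset_sort size_mset)
  also have "\<dots> = card {j. j < d \<and> v \<le> sort a ! j}"
    by (simp add: length_filter_conv_card la)
  also have "\<dots> \<le> card {Suc k..<d}"
  proof (intro card_mono)
    show "{j. j < d \<and> v \<le> sort a ! j} \<subseteq> {Suc k..<d}"
    proof
      fix j assume j: "j \<in> {j. j < d \<and> v \<le> sort a ! j}"
      have "Suc k \<le> j"
      proof (rule ccontr)
        assume "\<not> Suc k \<le> j"
        then have "sort a ! j \<le> sort a ! k" using k la by (intro sorted_nth_mono) auto
        then show False using j lt v_def by simp
      qed
      then show "j \<in> {Suc k..<d}" using j by auto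
    qed
  qed simp
  finally show False using k by simp
qed

definition phi :: "nat \<Rightarrow> nat \<Rightarrow> real" where
  "phi k t = (\<Prod>s\<in>{1..<k}. real t - real s)"

definition Phi :: "nat \<Rightarrow> nat list \<Rightarrow> nat list \<Rightarrow> real" where
  "Phi d a x = (\<Prod>i<d. phi (a!i) (x!i))"

lemma phi_poly: "phi k t = poly (\<Prod>s\<in>{1..<k}. [:- real s, 1:]) (real t)"
  by (simp add: phi_def poly_prod)

lemma phi_deg: "degree (\<Prod>s\<in>{1..<k}. [:- real s, 1:]) = k - 1"
  by (subst degree_prod_eq_sum_degree) auto

lemma phi_nz: "1 \<le> t \<Longrightarrow> phi k t \<noteq> 0 \<Longrightarrow> k \<le> t"
  by (rule ccontr) (auto simp: phi_def prod_zero_iff)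

lemma phi_self: "phi k k \<noteq> 0"
  by (auto simp: phi_def prod_zero_iff)

lemma list_le_eq: "length b = length a \<Longrightarrow> \<forall>i<length a. b!i \<le> a!i \<Longrightarrow> sum_list a \<le> sum_list (b::nat list) \<Longrightarrow> b = a"
proof (induction b a rule: list_induct2)
  case Nil then show ?case by simp
next
  case (Cons x xs y ys)
  have h: "\<forall>i<length ys. xs!i \<le> ys!i" using Cons.prems(1) by (metis Suc_less_eq length_Cons nth_Cons_Suc)
  have "x \<le> y" using Cons.prems(1) by force
  have "sum_list xs \<le> sum_list ys" using Cons.hyps h
    by (metis sum_list_mono2 [of xs ys] length_Cons) 
  then show ?case using Cons h \<open>x \<le> y\<close> by simp
qed



lemma indep:
  assumes GT: "G \<subseteq> tuples n d" and fG: "finite G"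
   and van: "\<forall>x\<in>tuples n d. (\<Sum>a\<in>G. g a * Phi d a x) = 0"
  shows "\<forall>a\<in>G. g a = 0"
proof (rule ccontr)
  assume "\<not> (\<forall>a\<in>G. g a = 0)"
  then obtain a0 where a0: "a0 \<in> G \<and> g a0 \<noteq> 0" by blast
  obtain a where a: "a \<in> G \<and> g a \<noteq> 0" and amin: "\<forall>b. b \<in> G \<and> g b \<noteq> 0 \<longrightarrow> sum_list a \<le> sum_list b"
    using ex_has_least_nat[of "\<lambda>b. b \<in> G \<and> g b \<noteq> 0" a0 sum_list] a0 by blast
  have aT: "a \<in> tuples n d" using a GT by auto
  then have la: "length a = d" and a1: "\<forall>i<d. 1 \<le> a!i"
    by (auto simp: tuples_def dest!: nth_mem)
  have zero: "g b * Phi d b a = 0" if b: "b \<in> G - {a}" for b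
  proof (rule ccontr)
    assume nz: "g b * Phi d b a \<noteq> 0"
    then have gb: "g b \<noteq> 0" and Pb: "Phi d b a \<noteq> 0" by auto
    have lb: "length b = d" using b GT by (auto simp: tuples_def)
    have "\<forall>i<d. phi (b!i) (a!i) \<noteq> 0" using Pb by (auto simp: Phi_def)
    then have le: "\<forall>i<d. b!i \<le> a!i" using a1 phi_nz by blast
    have "sum_list a \<le> sum_list b" using amin b gb by auto
    then have "b = a" using list_le_eq[of b a] le la lb by auto
    then show False using b by auto
  qed
  have "0 = (\<Sum>b\<in>G. g b * Phi d b a)" using van aT by simp
  also have "\<dots> = g a * Phi d a a + (\<Sum>b\<in>G-{a}. g b * Phi d b a)"
    using a sum.remove[OF fG, of a] by simp
  also have "\<dots> = g a * Phi d a a" proof -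
    have "(\<Sum>b\<in>G-{a}. g b * Phi d b a) = 0" by (rule sum.neutral) (use zero in blast)
    then show ?thesis by simp
  qed
  finally have "g a * Phi d a a = 0" by simp
  moreover have "Phi d a a \<noteq> 0" by (simp add: Phi_def phi_self)
  ultimately show False using a by simp
qed

lemma finite_tuples: "finite (tuples n d)"
proof -
  have "tuples n d = {xs. set xs \<subseteq> {1..n} \<and> length xs = d}" by (auto simp: tuples_def)
  then show ?thesis using finite_lists_length_eq[of "{1..n}" d] by simp
qed

lemma G0_prop:
  assumes sp: "sorted p" and a: "a \<in> G0 n p" and pi: "\<pi> permutes {..<length p}"
  shows "\<exists>i<length p. a!i < p!(\<pi> i)"
proof (rule ccontr)
  assume "\<not> ?thesis"
  then have ge: "\<forall>i<length p. p!(\<pi> i) \<le> a!i" by auto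
  have la: "length a = length p" using a by (auto simp: G0_def tuples_def)
  have "\<forall>k<length p. p!k \<le> sort a ! k"
    using sorted_ge[OF la refl sp pi ge] by blast
  then show False using a by (auto simp: G0_def)
qed

theorem lemma2:
  fixes n :: nat and p :: "nat list"
  assumes "sorted p" and "\<forall>i<length p. 1 \<le> p ! i \<and> p ! i \<le> n"
  shows "W n p \<ge> card (G0 n p) \<and>
         (\<forall>H. weakly_sat n p H \<longrightarrow> card H \<ge> card (G0 n p))"
proof -
  define d where "d = length p"
  define T where "T = tuples n d"
  have finT: "finite T" unfolding T_def by (rule finite_tuples)
  have G0T: "G0 n p \<subseteq> T" by (auto simp: G0_def T_def d_def)
  have finG: "finite (G0 n p)" using finite_subset[OF G0T finT] .
  have key: "\<forall>H. weakly_sat n p H \<longrightarrow> card H \<ge> card (G0 n p)"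
  proof (intro allI impI)
    fix H assume ws: "weakly_sat n p H"
    then obtain es where HT: "H \<subseteq> T" and des: "distinct es" and ses: "set es = T - H"
      and step: "\<forall>k<length es. copy_containing n p (H \<union> set (take (Suc k) es)) (es!k)"
      by (auto simp: weakly_sat_def T_def d_def)
    have finH: "finite H" using finite_subset[OF HT finT] .
    show "card H \<ge> card (G0 n p)"
    proof (rule ccontr)
      assume "\<not> card H \<ge> card (G0 n p)"
      then have lt: "card H < card (G0 n p)" by simp
      obtain g where g0: "\<forall>a. a \<notin> G0 n p \<longrightarrow> g a = 0" and gnz: "\<exists>a\<in>G0 n p. g a \<noteq> 0"
        and gH: "\<forall>b\<in>H. (\<Sum>a\<in>G0 n p. Phi d a b * g a) = 0"
        using lin_solve[OF finH finG lt, of "\<lambda>e a. Phi d a e"] by blast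
      define P where "P x = (\<Sum>a\<in>G0 n p. g a * Phi d a x)" for x
      have PH: "\<forall>e\<in>H. P e = 0" using gH by (simp add: P_def mult.commute)
      have Pes: "P (es!k) = 0" if "k < length es" for k
        using that
      proof (induction k rule: less_induct)
        case (less k)
        define e where "e = es!k"
        have eT: "e \<in> T" using less.prems ses e_def nth_mem by fastforce
        have cc: "copy_containing n p (H \<union> set (take (Suc k) es)) e" using step less.prems e_def by blast
        then obtain \<pi> S where pi: "\<pi> permutes {..<length p}"
          and Sc: "\<forall>i<length p. S i \<subseteq> {1..n} \<and> card (S i) = p!(\<pi> i)"
          and Sbox: "\<forall>x. length x = length p \<and> (\<forall>i<length p. x!i \<in> S i) \<longrightarrow> x \<in> H \<union> set (take (Suc k) es)"
          and eS: "\<forall>i<length p. e!i \<in> S i"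
          unfolding copy_containing_def by (elim exE conjE) (rule that)
        note pi = pi[folded d_def] and Sc = Sc[folded d_def] and Sbox = Sbox[folded d_def] and eS = eS[folded d_def]
        have pil: "\<pi> i < d" if "i < d" for i using permutes_in_image[OF pi, of i] that by simp
        have finS: "\<forall>i<d. finite (S i)"
        proof (intro allI impI)
          fix i assume "i < d"
          then have "card (S i) \<ge> 1" using Sc pil assms(2) d_def by auto
          then show "finite (S i)" using card_ge_0_finite by force
        qed
        have "\<forall>i<d. \<exists>c. c (e!i) \<noteq> 0 \<and> (\<forall>f::real poly. degree f + 2 \<le> card (S i) \<longrightarrow> (\<Sum>t\<in>S i. c t * poly f (real t)) = 0)"
          using univ finS eS by blast
        then obtain C where C: "\<forall>i<d. C i (e!i) \<noteq> 0 \<and> (\<forall>f::real poly. degree f + 2 \<le> card (S i) \<longrightarrow> (\<Sum>t\<in>S i. C i t * poly f (real t)) = 0)"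
          by metis
        have ebox: "e \<in> box d S" using eT eS by (auto simp: box_def T_def tuples_def)
        have Pz: "P x = 0" if "x \<in> box d S" "x \<noteq> e" for x
        proof -
          have "x \<in> H \<union> set (take (Suc k) es)" using Sbox that by (auto simp: box_def)
          moreover have "take (Suc k) es = take k es @ [e]" using less.prems e_def by (simp add: take_Suc_conv_app_nth)
          ultimately have "x \<in> H \<or> x \<in> set (take k es)" using that by auto
          then show ?thesis
          proof
            assume "x \<in> H" then show ?thesis using PH by auto
          next
            assume "x \<in> set (take k es)"
            then obtain j where "j < length (take k es)" "x = take k es ! j" by (auto simp: in_set_conv_nth)
            then have "j < k" "x = es!j" "j < length es" by auto
            then show ?thesis using less.IH by auto
          qed
        qed
        have finB: "finite (box d S)" using box_sum[of d S "\<lambda>_ _. 0"] finS by blast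
        have inner: "(\<Prod>i<d. \<Sum>t\<in>S i. C i t * phi (a!i) t) = 0" if aG: "a \<in> G0 n p" for a
        proof -
          obtain i where i: "i < d" "a!i < p!(\<pi> i)" using G0_prop[OF assms(1) aG] pi d_def by blast
          have "a \<in> T" using aG G0T by auto
          then have "1 \<le> a!i" using i by (auto simp: T_def tuples_def dest!: nth_mem)
          then have dg: "degree (\<Prod>s\<in>{1..<a!i}. [:- real s, 1:]) + 2 \<le> card (S i)"
            using i Sc phi_deg by simp
          have "(\<Sum>t\<in>S i. C i t * phi (a!i) t) = 0"
            using C i dg by (simp add: phi_poly)
          then show ?thesis using i by (intro prod_zero) auto
        qed
        have "(\<Sum>x\<in>box d S. (\<Prod>i<d. C i (x!i)) * P x)
            = (\<Sum>x\<in>box d S. \<Sum>a\<in>G0 n p. g a * (\<Prod>i<d. C i (x!i) * phi (a!i) (x!i)))"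
          by (intro sum.cong refl) (simp add: P_def Phi_def sum_distrib_left prod.distrib algebra_simps)
        also have "\<dots> = (\<Sum>a\<in>G0 n p. g a * (\<Sum>x\<in>box d S. \<Prod>i<d. C i (x!i) * phi (a!i) (x!i)))"
          by (subst sum.swap) (simp add: sum_distrib_left)
        also have "\<dots> = (\<Sum>a\<in>G0 n p. g a * (\<Prod>i<d. \<Sum>t\<in>S i. C i t * phi (a!i) t))"
          using box_sum[OF finS, of "\<lambda>i t. C i t * phi (_ ! i) t"] by (intro sum.cong refl) auto
        also have "\<dots> = 0" by (rule sum.neutral) (use inner in simp)
        finally have s0: "(\<Sum>x\<in>box d S. (\<Prod>i<d. C i (x!i)) * P x) = 0" .
        have "(\<Sum>x\<in>box d S. (\<Prod>i<d. C i (x!i)) * P x) = (\<Prod>i<d. C i (e!i)) * P e"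
          using finB ebox Pz by (simp add: sum.remove)
        moreover have "(\<Prod>i<d. C i (e!i)) \<noteq> 0" using C by auto
        ultimately show ?case using s0 e_def by simp
      qed
      have "\<forall>x\<in>tuples n d. (\<Sum>a\<in>G0 n p. g a * Phi d a x) = 0"
      proof
        fix x assume "x \<in> tuples n d"
        then have "x \<in> H \<or> x \<in> set es" using ses T_def by auto
        then show "(\<Sum>a\<in>G0 n p. g a * Phi d a x) = 0"
          using PH Pes unfolding P_def by (auto simp: in_set_conv_nth)
      qed
      then have "\<forall>a\<in>G0 n p. g a = 0" using indep G0T finG T_def by blast
      then show False using gnz by blast
    qed
  qed
  have wsT: "weakly_sat n p T"
    unfolding weakly_sat_def T_def d_def by (intro conjI exI[of _ "[]"]) auto
  have "card (G0 n p) \<le> W n p"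
    unfolding W_def using key wsT by (intro cInf_greatest) auto
  then show ?thesis using key by blast
qed


end
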